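(* Let $C, C'\in\mathbb{C}_2$. Then $\mathcal{T}(C\min C') = \mathcal{T}(C)\sqcap\mathcal{T}(C')$.
   Context: Channels: fix two inputs $D_0, D_1$. A two-row channel $C$ with output set $\mathcal{Y}$ is a pair of probability distributions $C_{D_0}, C_{D_1}$ on $\mathcal{Y}$ (its rows); in the discrete case it is a $2\times|\mathcal{Y}|$ matrix with nonnegative entries whose rows sum to $1$; in general the rows may be probability measures on a common measurable output space. $\mathbb{C}_2$ is the set of all two-row channels. A channel $W$ is a row-stochastic matrix (Markov kernel), and $C\cdot W$ denotes composition. Refinement: $C \sqsubseteq C'$ iff there is a channel $W$ with $C\cdot W = C'$; $C\min C'$ denotes the greatest lower bound of $C, C'$ in $(\mathbb{C}_2,\sqsubseteq)$ (it exists, unique up to mutual refinement). Trade-off functions: for distributions $p,q$ on $\mathcal{Y}$, a test is a (measurable) map $\phi:\mathcal{Y}\to[0,1]$, with $\alpha_\phi=\mathbb{E}_p[\phi]$ and $\beta_\phi = 1-\mathbb{E}_q[\phi]$; $\mathbf{T}(p,q)(\alpha)=\inf\{\beta_\phi : \alpha_\phi\le\alpha\}$. For $C\in\mathbb{C}_2$, $\mathcal{T}(C) := \mathbf{T}(C_{D_0},C_{D_1})$. $\mathbb{F}$ is the set of convex functions $f:[0,1]\to[0,1]$ with $f(\alpha)\le1-\alpha$ for all $\alpha$, ordered pointwise. For $f,g\in\mathbb{F}$, $f\sqcap g$ is the pointwise supremum of all $g'\in\mathbb{F}$ with $g'\le f$ and $g'\le g$. *)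

theory Defs
  imports "HOL-Probability.Probability"
begin

text \<open>A two-row channel: a pair of probability measures (rows C_D0, C_D1) on a
common measurable output space.\<close>
type_synonym 'y channel = "'y measure \<times> 'y measure"

definition is_channel :: "'y channel \<Rightarrow> bool" where
  "is_channel C \<longleftrightarrow> prob_space (fst C) \<and> prob_space (snd C) \<and> sets (fst C) = sets (snd C)"

definition refines :: "'a channel \<Rightarrow> 'b channel \<Rightarrow> bool" where
  "refines C C' \<longleftrightarrow> (\<exists>W. W \<in> measurable (fst C) (subprob_algebra (fst C')) \<and>
      (\<forall>y\<in>space (fst C). prob_space (W y)) \<and>
      fst C \<bind> W = fst C' \<and> snd C \<bind> W = snd C')"

text \<open>Competing lower
bounds range over channels with real outputs; every two-row channel is equivalent (mutual
refinement) to one with real outputs, via the likelihood-ratio statistic.\<close>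
definition is_channel_glb :: "'d channel \<Rightarrow> 'a channel \<Rightarrow> 'b channel \<Rightarrow> bool" where
  "is_channel_glb D C C' \<longleftrightarrow> is_channel D \<and> refines D C \<and> refines D C' \<and>
     (\<forall>E :: real channel. is_channel E \<and> refines E C \<and> refines E C' \<longrightarrow> refines E D)"

definition tradeoff :: "'y measure \<Rightarrow> 'y measure \<Rightarrow> real \<Rightarrow> real" where
  "tradeoff p q \<alpha> = Inf {1 - (\<integral>y. \<phi> y \<partial>q) | \<phi>.
      \<phi> \<in> borel_measurable p \<and> (\<forall>y\<in>space p. 0 \<le> \<phi> y \<and> \<phi> y \<le> 1) \<and> (\<integral>y. \<phi> y \<partial>p) \<le> \<alpha>}"

definition tradeoff_ch :: "'y channel \<Rightarrow> real \<Rightarrow> real" where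
  "tradeoff_ch C = tradeoff (fst C) (snd C)"

definition in_F :: "(real \<Rightarrow> real) \<Rightarrow> bool" where
  "in_F f \<longleftrightarrow> convex_on {0..1} f \<and> (\<forall>\<alpha>\<in>{0..1}. 0 \<le> f \<alpha> \<and> f \<alpha> \<le> 1 \<and> f \<alpha> \<le> 1 - \<alpha>)"

definition F_meet :: "(real \<Rightarrow> real) \<Rightarrow> (real \<Rightarrow> real) \<Rightarrow> real \<Rightarrow> real" where
  "F_meet f g \<alpha> = Sup {h \<alpha> | h. in_F h \<and> (\<forall>x\<in>{0..1}. h x \<le> f x \<and> h x \<le> g x)}"

end

theory Submission
  imports Defs
begin



definition is_test :: "'y measure \<Rightarrow> ('y \<Rightarrow> real) \<Rightarrow> bool" where
  "is_test M \<phi> \<longleftrightarrow> \<phi> \<in> borel_measurable M \<and> (\<forall>y\<in>space M. 0 \<le> \<phi> y \<and> \<phi> y \<le> 1)"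

lemma test_meas: "is_test N \<phi> \<Longrightarrow> sets M = sets N \<Longrightarrow> \<phi> \<in> borel_measurable M"
proof -
  assume a: "is_test N \<phi>" "sets M = sets N"
  have e: "borel_measurable M = borel_measurable N" using measurable_cong_sets[of M N borel borel] a(2) by simp
  show ?thesis using a(1) unfolding is_test_def e by (elim conjE)
qed

lemma test_bnd: "is_test N \<phi> \<Longrightarrow> sets M = sets N \<Longrightarrow> y \<in> space M \<Longrightarrow> 0 \<le> \<phi> y \<and> \<phi> y \<le> 1"
  unfolding is_test_def using sets_eq_imp_space_eq[of M N] by simp

lemma test_integrable:
  assumes "prob_space M" "is_test N \<phi>" "sets M = sets N"
  shows "integrable M \<phi>" "0 \<le> (\<integral>y. \<phi> y \<partial>M)" "(\<integral>y. \<phi> y \<partial>M) \<le> 1"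
proof -
  interpret prob_space M by fact
  have m: "\<phi> \<in> borel_measurable M" using assms(2,3) by (rule test_meas)
  have b: "\<And>y. y \<in> space M \<Longrightarrow> 0 \<le> \<phi> y \<and> \<phi> y \<le> 1" using assms(2,3) by (rule test_bnd)
  show i: "integrable M \<phi>"
    by (rule integrable_const_bound[where B=1]) (simp_all add: m b AE_I2 abs_le_iff)
  show "0 \<le> (\<integral>y. \<phi> y \<partial>M)" using b by (intro integral_nonneg_AE AE_I2) simp
  have "(\<integral>y. \<phi> y \<partial>M) \<le> (\<integral>y. 1 \<partial>M)"
    using b i by (intro integral_mono_AE AE_I2) simp_all
  then show "(\<integral>y. \<phi> y \<partial>M) \<le> 1" by (simp add: prob_space)
qed
lemma tradeoff_ch_def2:
  "tradeoff_ch C \<alpha> = Inf {1 - (\<integral>y. \<phi> y \<partial>snd C) | \<phi>. is_test (fst C) \<phi> \<and> (\<integral>y. \<phi> y \<partial>fst C) \<le> \<alpha>}"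
  unfolding tradeoff_ch_def tradeoff_def is_test_def by (simp only: conj_assoc)

lemma tradeoff_bdd:
  assumes "is_channel C"
  shows "bdd_below {1 - (\<integral>y. \<phi> y \<partial>snd C) | \<phi>. is_test (fst C) \<phi> \<and> (\<integral>y. \<phi> y \<partial>fst C) \<le> \<alpha>}"
proof (rule bdd_belowI[where m=0])
  fix x assume "x \<in> {1 - (\<integral>y. \<phi> y \<partial>snd C) | \<phi>. is_test (fst C) \<phi> \<and> (\<integral>y. \<phi> y \<partial>fst C) \<le> \<alpha>}"
  then obtain \<phi> where "is_test (fst C) \<phi>" "x = 1 - (\<integral>y. \<phi> y \<partial>snd C)" by blast
  moreover have "prob_space (snd C)" "sets (snd C) = sets (fst C)" using assms unfolding is_channel_def by auto
  ultimately show "0 \<le> x" using test_integrable(3)[of "snd C" "fst C" \<phi>] by simp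
qed

lemma test_zero: "is_test M (\<lambda>_. 0)" unfolding is_test_def by simp
lemma test_const: "0 \<le> a \<Longrightarrow> a \<le> 1 \<Longrightarrow> is_test M (\<lambda>_. a)" unfolding is_test_def by simp

lemma tradeoff_le:
  assumes "is_channel C" "is_test (fst C) \<phi>" "(\<integral>y. \<phi> y \<partial>fst C) \<le> \<alpha>"
  shows "tradeoff_ch C \<alpha> \<le> 1 - (\<integral>y. \<phi> y \<partial>snd C)"
  unfolding tradeoff_ch_def2
  by (rule cInf_lower[OF _ tradeoff_bdd[OF assms(1)]]) (use assms(2,3) in blast)

lemma tradeoff_ge:
  assumes "is_channel C" "0 \<le> \<alpha>"
    and "\<And>\<phi>. is_test (fst C) \<phi> \<Longrightarrow> (\<integral>y. \<phi> y \<partial>fst C) \<le> \<alpha> \<Longrightarrow> b \<le> 1 - (\<integral>y. \<phi> y \<partial>snd C)"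
  shows "b \<le> tradeoff_ch C \<alpha>"
  unfolding tradeoff_ch_def2
proof (rule cInf_greatest)
  have "(\<integral>y. 0 \<partial>fst C) \<le> \<alpha>" using assms(2) by simp
  then show "{1 - (\<integral>y. \<phi> y \<partial>snd C) | \<phi>. is_test (fst C) \<phi> \<and> (\<integral>y. \<phi> y \<partial>fst C) \<le> \<alpha>} \<noteq> {}"
    using test_zero[of "fst C"] by blast
  fix x assume "x \<in> {1 - (\<integral>y. \<phi> y \<partial>snd C) | \<phi>. is_test (fst C) \<phi> \<and> (\<integral>y. \<phi> y \<partial>fst C) \<le> \<alpha>}"
  then obtain \<phi> where "is_test (fst C) \<phi>" "(\<integral>y. \<phi> y \<partial>fst C) \<le> \<alpha>" "x = 1 - (\<integral>y. \<phi> y \<partial>snd C)" by blast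
  then show "b \<le> x" using assms(3) by simp
qed

lemma tradeoff_nonneg:
  assumes "is_channel C" "0 \<le> \<alpha>" shows "0 \<le> tradeoff_ch C \<alpha>"
proof (rule tradeoff_ge[OF assms])
  fix \<phi> assume "is_test (fst C) \<phi>"
  moreover have "prob_space (snd C)" "sets (snd C) = sets (fst C)" using assms unfolding is_channel_def by auto
  ultimately show "0 \<le> 1 - (\<integral>y. \<phi> y \<partial>snd C)" using test_integrable(3)[of "snd C" "fst C" \<phi>] by simp
qed

lemma tradeoff_le_1m:
  assumes "is_channel C" "0 \<le> \<alpha>" "\<alpha> \<le> 1" shows "tradeoff_ch C \<alpha> \<le> 1 - \<alpha>"
proof -
  interpret p: prob_space "fst C" using assms unfolding is_channel_def by simp
  interpret q: prob_space "snd C" using assms unfolding is_channel_def by simp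
  have "tradeoff_ch C \<alpha> \<le> 1 - (\<integral>y. \<alpha> \<partial>snd C)"
    by (rule tradeoff_le[OF assms(1) test_const[OF assms(2,3)]]) (simp add: p.prob_space)
  then show ?thesis by (simp add: q.prob_space)
qed

lemma tradeoff_approx:
  assumes "is_channel C" "0 \<le> \<alpha>" "0 < e"
  shows "\<exists>\<phi>. is_test (fst C) \<phi> \<and> (\<integral>y. \<phi> y \<partial>fst C) \<le> \<alpha> \<and> 1 - (\<integral>y. \<phi> y \<partial>snd C) < tradeoff_ch C \<alpha> + e"
proof -
  let ?S = "{1 - (\<integral>y. \<phi> y \<partial>snd C) | \<phi>. is_test (fst C) \<phi> \<and> (\<integral>y. \<phi> y \<partial>fst C) \<le> \<alpha>}"
  have "(\<integral>y. 0 \<partial>fst C) \<le> \<alpha>" using assms(2) by simp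
  then have ne: "?S \<noteq> {}" using test_zero[of "fst C"] by blast
  have "Inf ?S < tradeoff_ch C \<alpha> + e" using assms(3) unfolding tradeoff_ch_def2 by simp
  then obtain x where "x \<in> ?S" "x < tradeoff_ch C \<alpha> + e" using cInf_lessD[OF ne] by blast
  then show ?thesis by blast
qed

lemma test_mix:
  assumes "is_test M f" "is_test M g" "0 \<le> t" "t \<le> 1"
  shows "is_test M (\<lambda>y. (1 - t) * f y + t * g y)"
proof -
  have "\<And>y. y \<in> space M \<Longrightarrow> 0 \<le> (1 - t) * f y + t * g y \<and> (1 - t) * f y + t * g y \<le> 1"
  proof -
    fix y assume y: "y \<in> space M"
    have "0 \<le> f y" "f y \<le> 1" "0 \<le> g y" "g y \<le> 1" using assms(1,2) y unfolding is_test_def by auto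
    then have "(1 - t) * f y \<le> (1 - t)" "t * g y \<le> t" using assms(3,4) by (simp_all add: mult_left_le)
    moreover have "0 \<le> (1 - t) * f y" "0 \<le> t * g y" using assms(3,4) \<open>0 \<le> f y\<close> \<open>0 \<le> g y\<close> by simp_all
    ultimately show "0 \<le> (1 - t) * f y + t * g y \<and> (1 - t) * f y + t * g y \<le> 1" by linarith
  qed
  moreover have "(\<lambda>y. (1 - t) * f y + t * g y) \<in> borel_measurable M" using assms(1,2) unfolding is_test_def by (intro borel_measurable_add borel_measurable_times borel_measurable_const) auto
  ultimately show ?thesis unfolding is_test_def by blast
qed

lemma integral_mix:
  assumes "prob_space M" "is_test N f" "is_test N g" "sets M = sets N"
  shows "(\<integral>y. (1 - t) * f y + t * g y \<partial>M) = (1 - t) * (\<integral>y. f y \<partial>M) + t * (\<integral>y. g y \<partial>M)"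
  using test_integrable(1)[OF assms(1,2,4)] test_integrable(1)[OF assms(1,3,4)] by simp

lemma tradeoff_convex:
  assumes C: "is_channel C" and x: "x \<in> {0..1}" and y: "y \<in> {0..1}" and t: "0 \<le> t" "t \<le> 1"
  shows "tradeoff_ch C ((1 - t) * x + t * y) \<le> (1 - t) * tradeoff_ch C x + t * tradeoff_ch C y"
proof (rule field_le_epsilon)
  fix e :: real assume e: "0 < e"
  have ps: "prob_space (fst C)" "prob_space (snd C)" "sets (snd C) = sets (fst C)" using C unfolding is_channel_def by auto
  obtain f where f: "is_test (fst C) f" "(\<integral>y. f y \<partial>fst C) \<le> x" "1 - (\<integral>y. f y \<partial>snd C) < tradeoff_ch C x + e"
    using tradeoff_approx[OF C _ e, of x] x by auto
  obtain g where g: "is_test (fst C) g" "(\<integral>y. g y \<partial>fst C) \<le> y" "1 - (\<integral>y. g y \<partial>snd C) < tradeoff_ch C y + e"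
    using tradeoff_approx[OF C _ e, of y] y by auto
  have i1: "(\<integral>z. (1 - t) * f z + t * g z \<partial>fst C) = (1 - t) * (\<integral>y. f y \<partial>fst C) + t * (\<integral>y. g y \<partial>fst C)"
    by (rule integral_mix[OF ps(1) f(1) g(1) refl])
  have i2: "(\<integral>z. (1 - t) * f z + t * g z \<partial>snd C) = (1 - t) * (\<integral>y. f y \<partial>snd C) + t * (\<integral>y. g y \<partial>snd C)"
    by (rule integral_mix[OF ps(2) f(1) g(1) ps(3)])
  have "(1 - t) * (\<integral>y. f y \<partial>fst C) \<le> (1 - t) * x" "t * (\<integral>y. g y \<partial>fst C) \<le> t * y"
    using f(2) g(2) t by (simp_all add: mult_left_mono)
  then have a: "(\<integral>z. (1 - t) * f z + t * g z \<partial>fst C) \<le> (1 - t) * x + t * y" using i1 by linarith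
  have "tradeoff_ch C ((1 - t) * x + t * y) \<le> 1 - (\<integral>z. (1 - t) * f z + t * g z \<partial>snd C)"
    by (rule tradeoff_le[OF C test_mix[OF f(1) g(1) t] a])
  also have "\<dots> = (1 - t) * (1 - (\<integral>y. f y \<partial>snd C)) + t * (1 - (\<integral>y. g y \<partial>snd C))"
    using i2 by (simp add: algebra_simps)
  also have "\<dots> \<le> (1 - t) * (tradeoff_ch C x + e) + t * (tradeoff_ch C y + e)"
    using f(3) g(3) t by (intro add_mono mult_left_mono) simp_all
  also have "\<dots> = (1 - t) * tradeoff_ch C x + t * tradeoff_ch C y + e" by (simp add: algebra_simps)
  finally show "tradeoff_ch C ((1 - t) * x + t * y) \<le> (1 - t) * tradeoff_ch C x + t * tradeoff_ch C y + e" .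
qed

lemma tradeoff_in_F:
  assumes C: "is_channel C" shows "in_F (tradeoff_ch C)"
  unfolding in_F_def
proof (intro conjI ballI)
  show "convex_on {0..1} (tradeoff_ch C)"
    by (rule convex_onI) (use tradeoff_convex[OF C] in simp_all)
  fix a :: real assume a: "a \<in> {0..1}"
  show "0 \<le> tradeoff_ch C a" using tradeoff_nonneg[OF C] a by simp
  show "tradeoff_ch C a \<le> 1 - a" using tradeoff_le_1m[OF C] a by simp
  then show "tradeoff_ch C a \<le> 1" using a by simp
qed

lemma data_processing:
  assumes X: "is_channel X" and Y: "is_channel Y" and R: "refines X Y" and a: "0 \<le> \<alpha>"
  shows "tradeoff_ch X \<alpha> \<le> tradeoff_ch Y \<alpha>"
proof -
  obtain W where W: "W \<in> measurable (fst X) (subprob_algebra (fst Y))"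
      "\<And>y. y \<in> space (fst X) \<Longrightarrow> prob_space (W y)"
      "fst X \<bind> W = fst Y" "snd X \<bind> W = snd Y"
    using R unfolding refines_def by blast
  have psX: "prob_space (fst X)" "prob_space (snd X)" "sets (snd X) = sets (fst X)" using X unfolding is_channel_def by auto
  have psY: "prob_space (fst Y)" "prob_space (snd Y)" "sets (snd Y) = sets (fst Y)" using Y unfolding is_channel_def by auto
  have W2: "W \<in> measurable (snd X) (subprob_algebra (fst Y))"
    using W(1) measurable_cong_sets[OF psX(3) refl, of "subprob_algebra (fst Y)"] by simp
  have spX: "space (snd X) = space (fst X)" using psX(3) by (rule sets_eq_imp_space_eq)
  have setsW: "\<And>x. x \<in> space (fst X) \<Longrightarrow> sets (W x) = sets (fst Y)"
    using W(1) by (simp add: measurable_def space_subprob_algebra Pi_iff)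
  show ?thesis
  proof (rule tradeoff_ge[OF Y a])
    fix \<phi> assume t: "is_test (fst Y) \<phi>" and ia: "(\<integral>y. \<phi> y \<partial>fst Y) \<le> \<alpha>"
    define \<psi> where "\<psi> x = (\<integral>y. \<phi> y \<partial>W x)" for x
    have pm: "\<phi> \<in> borel_measurable (fst Y)" using t unfolding is_test_def by simp
    have pb: "\<And>y. y \<in> space (fst Y) \<Longrightarrow> \<bar>\<phi> y\<bar> \<le> 1" using t unfolding is_test_def by auto
    have psim: "\<psi> \<in> borel_measurable (fst X)"
      unfolding \<psi>_def using measurable_compose[OF W(1) integral_measurable_subprob_algebra[OF pm]] by (simp add: o_def)
    have pbnd: "\<And>x. x \<in> space (fst X) \<Longrightarrow> 0 \<le> \<psi> x \<and> \<psi> x \<le> 1"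
      unfolding \<psi>_def using test_integrable(2,3)[OF W(2) t setsW] by simp
    have tpsi: "is_test (fst X) \<psi>" unfolding is_test_def using psim pbnd by blast
    have fm1: "finite_measure (fst X)" "finite_measure (snd X)" using psX prob_space_def by blast+
    have AE1: "AE x in fst X. emeasure (W x) (space (W x)) \<le> ennreal 1"
      using W(2) by (intro AE_I2) (simp add: prob_space.emeasure_space_1)
    have AE2: "AE x in snd X. emeasure (W x) (space (W x)) \<le> ennreal 1"
      using W(2) spX by (intro AE_I2) (simp add: prob_space.emeasure_space_1)
    have e1: "(\<integral>x. \<psi> x \<partial>fst X) = (\<integral>y. \<phi> y \<partial>fst Y)"
      unfolding \<psi>_def using integral_bind[OF pm pb W(1) fm1(1) AE1] W(3) by simp
    have e2: "(\<integral>x. \<psi> x \<partial>snd X) = (\<integral>y. \<phi> y \<partial>snd Y)"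
      unfolding \<psi>_def using integral_bind[OF pm pb W2 fm1(2) AE2] W(4) by simp
    have "tradeoff_ch X \<alpha> \<le> 1 - (\<integral>x. \<psi> x \<partial>snd X)"
      by (rule tradeoff_le[OF X tpsi]) (use e1 ia in simp)
    then show "tradeoff_ch X \<alpha> \<le> 1 - (\<integral>y. \<phi> y \<partial>snd Y)" using e2 by simp
  qed
qed



lemma subgradient:
  fixes h :: "real \<Rightarrow> real"
  assumes cv: "convex_on {0..1} h" and a: "0 < a" "a < 1"
  shows "\<exists>\<sigma>. \<forall>x\<in>{0..1}. h a + \<sigma> * (x - a) \<le> h x"
proof -
  define S where "S = {(h x - h a) / (x - a) | x. 0 \<le> x \<and> x < a}"
  have key: "(h x - h a) / (x - a) \<le> (h a - h y) / (a - y)" if "0 \<le> x" "x < a" "a < y" "y \<le> 1" for x y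
  proof -
    have "(h x - h a) / (x - a) \<le> (h x - h y) / (x - y)"
      using convex_on_slope_le(1)[OF cv, of x y a] that by simp
    also have "\<dots> \<le> (h a - h y) / (a - y)"
      using convex_on_slope_le(2)[OF cv, of x y a] that by simp
    finally show ?thesis .
  qed
  have ne: "S \<noteq> {}" unfolding S_def using a by blast
  have bdd: "bdd_above S" unfolding S_def
    using key[of _ 1] a by (intro bdd_aboveI[where M="(h a - h 1) / (a - 1)"]) auto
  define \<sigma> where "\<sigma> = Sup S"
  have "h a + \<sigma> * (x - a) \<le> h x" if x: "x \<in> {0..1}" for x
  proof (cases x a rule: linorder_cases)
    case less
    have "(h x - h a) / (x - a) \<le> \<sigma>" unfolding \<sigma>_def
      by (rule cSup_upper[OF _ bdd]) (use less x in \<open>auto simp: S_def\<close>)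
    then have "\<sigma> * (x - a) \<le> (h x - h a)"
      using less by (simp add: divide_le_eq mult.commute)
    then show ?thesis by simp
  next
    case equal then show ?thesis by simp
  next
    case greater
    have "\<sigma> \<le> (h a - h x) / (a - x)" unfolding \<sigma>_def
      by (rule cSup_least[OF ne]) (use key greater x in \<open>auto simp: S_def\<close>)
    also have "\<dots> = (h x - h a) / (x - a)" by (simp add: divide_simps) (simp add: algebra_simps)
    finally have "\<sigma> * (x - a) \<le> (h x - h a)"
      using greater by (simp add: le_divide_eq mult.commute)
    then show ?thesis by simp
  qed
  then show ?thesis by blast
qed



definition Ech :: "real \<Rightarrow> real \<Rightarrow> real channel" where
  "Ech c s = (measure_pmf (map_pmf (\<lambda>b. if b then 1 else 2) (bernoulli_pmf (c / s))),
              measure_pmf (map_pmf (\<lambda>b. if b then 0 else 1) (bernoulli_pmf (1 - c))))"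

lemma Ech_channel: "is_channel (Ech c s)"
  unfolding is_channel_def Ech_def by (simp add: measure_pmf.prob_space_axioms)

lemma Ech_int1:
  assumes "0 \<le> c" "c \<le> s" "0 < s"
  shows "(\<integral>y. \<phi> y \<partial>fst (Ech c s)) = (c / s) * \<phi> 1 + (1 - c / s) * \<phi> 2"
proof -
  have "c / s \<le> 1" using assms by simp
  then show ?thesis unfolding Ech_def using assms by (simp add: algebra_simps)
qed

lemma Ech_int2:
  assumes "0 \<le> c" "c \<le> 1"
  shows "(\<integral>y. \<phi> y \<partial>snd (Ech c s)) = (1 - c) * \<phi> 0 + c * \<phi> 1"
  unfolding Ech_def using assms by (simp add: algebra_simps)

lemma Ech_tradeoff:
  assumes c: "0 < c" "c < 1" "c < s" and a: "0 \<le> \<alpha>"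
  shows "c - s * \<alpha> \<le> tradeoff_ch (Ech c s) \<alpha>"
proof (rule tradeoff_ge[OF Ech_channel a])
  fix \<phi> assume t: "is_test (fst (Ech c s)) \<phi>" and ia: "(\<integral>y. \<phi> y \<partial>fst (Ech c s)) \<le> \<alpha>"
  have sp: "space (fst (Ech c s)) = UNIV" unfolding Ech_def by simp
  have b: "0 \<le> \<phi> y" "\<phi> y \<le> 1" for y using t sp unfolding is_test_def by auto
  have s: "0 < s" using c by simp
  have "s * ((c / s) * \<phi> 1 + (1 - c / s) * \<phi> 2) \<le> s * \<alpha>"
    using ia Ech_int1[where \<phi>=\<phi> and c=c and s=s] c s by (simp add: mult_left_mono)
  moreover have "s * ((c / s) * \<phi> 1 + (1 - c / s) * \<phi> 2) = c * \<phi> 1 + (s - c) * \<phi> 2"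
    using s by (simp add: algebra_simps)
  moreover have "0 \<le> (s - c) * \<phi> 2" using b c by simp
  moreover have "(1 - c) * \<phi> 0 \<le> 1 - c" using b c by (simp add: mult_left_le)
  ultimately have "c - s * \<alpha> \<le> 1 - ((1 - c) * \<phi> 0 + c * \<phi> 1)" by linarith
  then show "c - s * \<alpha> \<le> 1 - (\<integral>y. \<phi> y \<partial>snd (Ech c s))" using Ech_int2[where \<phi>=\<phi> and c=c and s=s] c by simp
qed



lemma real_density:
  assumes fm: "finite_measure \<mu>" and p: "prob_space p" and s: "sets p = sets \<mu>" and ac: "absolutely_continuous \<mu> p"
  obtains f where "f \<in> borel_measurable \<mu>" "\<And>x. 0 \<le> f x" "p = density \<mu> (\<lambda>x. ennreal (f x))"
proof -
  interpret finite_measure \<mu> by fact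
  obtain F where F: "F \<in> borel_measurable \<mu>" "density \<mu> F = p"
    using Radon_Nikodym[OF ac s] by blast
  have sp: "space p = space \<mu>" using s by (rule sets_eq_imp_space_eq)
  have "(\<integral>\<^sup>+x. F x \<partial>\<mu>) = (\<integral>\<^sup>+x. F x * indicator (space \<mu>) x \<partial>\<mu>)"
    by (intro nn_integral_cong) simp
  also have "\<dots> = emeasure (density \<mu> F) (space \<mu>)"
    by (rule emeasure_density[symmetric, OF F(1)]) simp
  also have "\<dots> = 1" using F(2) sp prob_space.emeasure_space_1[OF p] by simp
  finally have "(\<integral>\<^sup>+x. F x \<partial>\<mu>) \<noteq> \<infinity>" by simp
  then have ae: "AE x in \<mu>. F x \<noteq> \<infinity>" by (rule nn_integral_PInf_AE[OF F(1)])
  have "density \<mu> F = density \<mu> (\<lambda>x. ennreal (enn2real (F x)))"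
    by (rule density_cong[OF F(1)]) (use F(1) ae in \<open>auto simp: less_top\<close>)
  then show ?thesis using that[of "\<lambda>x. enn2real (F x)"] F by simp
qed

lemma channel_densities:
  assumes C: "is_channel C"
  obtains \<mu> f g where "finite_measure \<mu>" "sets \<mu> = sets (fst C)"
    "f \<in> borel_measurable \<mu>" "g \<in> borel_measurable \<mu>" "\<And>x. 0 \<le> f x" "\<And>x. 0 \<le> g x"
    "fst C = density \<mu> (\<lambda>x. ennreal (f x))" "snd C = density \<mu> (\<lambda>x. ennreal (g x))"
proof -
  define p where "p = fst C"
  define q where "q = snd C"
  have pq: "prob_space p" "prob_space q" "sets q = sets p" using C unfolding is_channel_def p_def q_def by auto
  define K where "K b = (if b then p else q)" for b
  define \<mu> where "\<mu> = measure_pmf (bernoulli_pmf (1/2)) \<bind> K"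
  have Kin: "K b \<in> space (subprob_algebra p)" for b
    using pq by (auto simp: K_def space_subprob_algebra prob_space_imp_subprob_space)
  have Km: "K \<in> measurable (measure_pmf (bernoulli_pmf (1/2))) (subprob_algebra p)"
    using Kin by simp
  have sm: "sets \<mu> = sets p" unfolding \<mu>_def
    by (rule sets_bind) (use Kin in \<open>auto simp: space_subprob_algebra\<close>)
  have em: "emeasure \<mu> A = emeasure p A * ennreal (1/2) + emeasure q A * ennreal (1/2)" if A: "A \<in> sets p" for A
  proof -
    have "emeasure \<mu> A = (\<integral>\<^sup>+b. emeasure (K b) A \<partial>measure_pmf (bernoulli_pmf (1/2)))"
      unfolding \<mu>_def by (rule emeasure_bind[OF _ Km A]) simp
    also have "\<dots> = emeasure p A * ennreal (1/2) + emeasure q A * ennreal (1/2)"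
      by (simp add: K_def)
    finally show ?thesis .
  qed
  have pm: "prob_space \<mu>" unfolding \<mu>_def
    by (rule prob_space.prob_space_bind[OF measure_pmf.prob_space_axioms _ Km]) (use pq in \<open>simp add: K_def\<close>)
  then have fm: "finite_measure \<mu>" by (simp add: prob_space_def)
  have ac1: "absolutely_continuous \<mu> p" "absolutely_continuous \<mu> q"
    unfolding absolutely_continuous_def
  proof (safe)
    fix A assume "A \<in> null_sets \<mu>"
    then have A: "A \<in> sets p" "emeasure \<mu> A = 0" using sm by auto
    then have "emeasure p A * ennreal (1/2) + emeasure q A * ennreal (1/2) = 0" using em by simp
    then have "emeasure p A = 0" "emeasure q A = 0" by (simp_all add: ennreal_eq_0_iff)
    then show "A \<in> null_sets p" "A \<in> null_sets q" using A pq(3) by auto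
  qed
  obtain f where f: "f \<in> borel_measurable \<mu>" "\<And>x. 0 \<le> f x" "p = density \<mu> (\<lambda>x. ennreal (f x))"
    using real_density[OF fm pq(1) sm[symmetric] ac1(1)] by blast
  obtain g where g: "g \<in> borel_measurable \<mu>" "\<And>x. 0 \<le> g x" "q = density \<mu> (\<lambda>x. ennreal (g x))"
    using real_density[OF fm pq(2) _ ac1(2)] sm pq(3) by metis
  show ?thesis by (rule that[OF fm _ f(1) g(1) f(2) g(2)]) (use sm f g in \<open>simp_all add: p_def q_def\<close>)
qed



lemma dens_int:
  assumes fm: "finite_measure \<mu>" and f: "f \<in> borel_measurable \<mu>" "\<And>x. 0 \<le> f x"
    and p: "prob_space (density \<mu> (\<lambda>x. ennreal (f x)))"
  shows "integrable \<mu> f" "(\<integral>x. f x \<partial>\<mu>) = 1"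
proof -
  have "(\<integral>\<^sup>+x. ennreal (f x) \<partial>\<mu>) = (\<integral>\<^sup>+x. ennreal (f x) * indicator (space \<mu>) x \<partial>\<mu>)"
    by (intro nn_integral_cong) simp
  also have "\<dots> = emeasure (density \<mu> (\<lambda>x. ennreal (f x))) (space \<mu>)"
    by (rule emeasure_density[symmetric]) (use f in auto)
  also have "\<dots> = 1" using prob_space.emeasure_space_1[OF p] by simp
  finally have e: "(\<integral>\<^sup>+x. ennreal (f x) \<partial>\<mu>) = 1" .
  show i: "integrable \<mu> f" by (rule integrableI_nonneg) (use f e in auto)
  have "ennreal (\<integral>x. f x \<partial>\<mu>) = 1" using nn_integral_eq_integral[OF i] f e by simp
  then show "(\<integral>x. f x \<partial>\<mu>) = 1" using f(2) integral_nonneg_AE[of f \<mu>] by simp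
qed

lemma dens_test:
  assumes fm: "finite_measure \<mu>" and f: "f \<in> borel_measurable \<mu>" "\<And>x. 0 \<le> f x"
    and p: "prob_space (density \<mu> (\<lambda>x. ennreal (f x)))"
    and t: "is_test N \<phi>" and s: "sets N = sets \<mu>"
  shows "integrable \<mu> (\<lambda>x. f x * \<phi> x)"
    "(\<integral>x. \<phi> x \<partial>density \<mu> (\<lambda>x. ennreal (f x))) = (\<integral>x. f x * \<phi> x \<partial>\<mu>)"
proof -
  have pm: "\<phi> \<in> borel_measurable \<mu>" using test_meas[OF t s[symmetric]] .
  have pb: "\<And>x. x \<in> space \<mu> \<Longrightarrow> 0 \<le> \<phi> x \<and> \<phi> x \<le> 1" using test_bnd[OF t s[symmetric]] .
  show "integrable \<mu> (\<lambda>x. f x * \<phi> x)"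
  proof (rule Bochner_Integration.integrable_bound[OF dens_int(1)[OF fm f p]])
    show "(\<lambda>x. f x * \<phi> x) \<in> borel_measurable \<mu>" using f pm by simp
    show "AE x in \<mu>. norm (f x * \<phi> x) \<le> norm (f x)"
    proof (rule AE_I2)
      fix x assume "x \<in> space \<mu>"
      then have "0 \<le> \<phi> x" "\<phi> x \<le> 1" using pb by auto
      then show "norm (f x * \<phi> x) \<le> norm (f x)" using f(2)[of x] by (simp add: abs_mult mult_left_le)
    qed
  qed
  show "(\<integral>x. \<phi> x \<partial>density \<mu> (\<lambda>x. ennreal (f x))) = (\<integral>x. f x * \<phi> x \<partial>\<mu>)"
    using integral_density[OF pm f(1)] f(2) by simp
qed




lemma tradeoff0_approx:
  assumes C: "is_channel C" and e: "0 < e"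
  shows "\<exists>s>0. \<forall>\<phi>. is_test (fst C) \<phi> \<longrightarrow>
     tradeoff_ch C 0 - e \<le> 1 - (\<integral>y. \<phi> y \<partial>snd C) + s * (\<integral>y. \<phi> y \<partial>fst C)"
proof -
  obtain \<mu> f g where fm: "finite_measure \<mu>" and sm: "sets \<mu> = sets (fst C)"
    and f: "f \<in> borel_measurable \<mu>" and g: "g \<in> borel_measurable \<mu>"
    and fnn: "\<And>x. 0 \<le> f x" and gnn: "\<And>x. 0 \<le> g x"
    and p: "fst C = density \<mu> (\<lambda>x. ennreal (f x))" and q: "snd C = density \<mu> (\<lambda>x. ennreal (g x))"
    using channel_densities[OF C] by blast
  have pp: "prob_space (density \<mu> (\<lambda>x. ennreal (f x)))" "prob_space (density \<mu> (\<lambda>x. ennreal (g x)))"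
    using C p q unfolding is_channel_def by auto
  have sq: "sets (snd C) = sets (fst C)" using C unfolding is_channel_def by auto
  have fi: "integrable \<mu> f" "(\<integral>x. f x \<partial>\<mu>) = 1" using dens_int[OF fm f fnn pp(1)] by auto
  have gi: "integrable \<mu> g" "(\<integral>x. g x \<partial>\<mu>) = 1" using dens_int[OF fm g gnn pp(2)] by auto
  define L where "L = (\<integral>x. g x - g x * indicator {x\<in>space \<mu>. f x = 0} x \<partial>\<mu>)"
  define Z where "Z = {x\<in>space \<mu>. f x = 0}"
  have Zm: "Z \<in> sets \<mu>" unfolding Z_def using f by measurable
  have tZ: "is_test (fst C) (indicator Z)"
    unfolding is_test_def using Zm sm by (auto simp: indicator_def measurable_cong_sets[OF sm[symmetric] refl])
  have "tradeoff_ch C 0 \<le> 1 - (\<integral>y. indicator Z y \<partial>snd C)"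
  proof (rule tradeoff_le[OF C tZ])
    have "(\<integral>y. indicator Z y \<partial>fst C) = (\<integral>x. f x * indicator Z x \<partial>\<mu>)"
      using dens_test(2)[OF fm f fnn pp(1) tZ sm[symmetric]] p by simp
    also have "\<dots> = (\<integral>x. 0 \<partial>\<mu>)" by (intro Bochner_Integration.integral_cong) (auto simp: Z_def indicator_def)
    also have "\<dots> = 0" by simp
    finally show "(\<integral>y. (indicator Z y :: real) \<partial>fst C) \<le> 0" by (rule eq_refl)
  qed
  also have "(\<integral>y. indicator Z y \<partial>snd C) = (\<integral>x. g x * indicator Z x \<partial>\<mu>)"
    using dens_test(2)[OF fm g gnn pp(2) tZ sm[symmetric]] q by simp
  also have "1 - \<dots> = L"
    unfolding L_def Z_def[symmetric]
    using gi dens_test(1)[OF fm g gnn pp(2) tZ sm[symmetric]] by simp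
  finally have TL: "tradeoff_ch C 0 \<le> L" .
  define S where "S n x = min (g x) (real n * f x)" for n x
  have lim: "(\<lambda>n. \<integral>x. S n x \<partial>\<mu>) \<longlonglongrightarrow> L"
    unfolding L_def
  proof (rule integral_dominated_convergence[where w=g])
    show "(\<lambda>x. g x - g x * indicator {x \<in> space \<mu>. f x = 0} x) \<in> borel_measurable \<mu>"
      using g Zm unfolding Z_def by measurable
    show "S n \<in> borel_measurable \<mu>" for n unfolding S_def using f g by measurable
    show "integrable \<mu> g" by (rule gi)
    show "AE x in \<mu>. norm (S n x) \<le> g x" for n
      using gnn fnn by (intro AE_I2) (simp add: S_def)
    show "AE x in \<mu>. (\<lambda>n. S n x) \<longlonglongrightarrow> g x - g x * indicator {x \<in> space \<mu>. f x = 0} x"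
    proof (rule AE_I2)
      fix x assume x: "x \<in> space \<mu>"
      show "(\<lambda>n. S n x) \<longlonglongrightarrow> g x - g x * indicator {x \<in> space \<mu>. f x = 0} x"
      proof (cases "f x = 0")
        case True then show ?thesis using x gnn[of x] by (simp add: S_def)
      next
        case False
        then have fp: "0 < f x" using fnn[of x] by simp
        obtain N :: nat where N: "g x / f x < real N" using reals_Archimedean2 by blast
        have "eventually (\<lambda>n. S n x = g x) sequentially"
        proof (rule eventually_sequentiallyI[of N])
          fix n assume "N \<le> n"
          then have "g x / f x < real n" using N by linarith
          then have "g x < real n * f x" using fp by (simp add: divide_less_eq)
          then show "S n x = g x" by (simp add: S_def)
        qed
        then have "(\<lambda>n. S n x) \<longlonglongrightarrow> g x" by (rule tendsto_eventually)
        then show ?thesis using False x by simp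
      qed
    qed
  qed
  have "eventually (\<lambda>n. L - e < (\<integral>x. S n x \<partial>\<mu>)) sequentially"
    using order_tendstoD(1)[OF lim] e by simp
  then obtain N where N: "\<And>n. N \<le> n \<Longrightarrow> L - e < (\<integral>x. S n x \<partial>\<mu>)"
    unfolding eventually_sequentially by blast
  define s where "s = real (Suc N)"
  have sN: "L - e < (\<integral>x. min (g x) (s * f x) \<partial>\<mu>)" using N[of "Suc N"] by (simp add: S_def s_def)
  have "0 < s" by (simp add: s_def)
  moreover have "tradeoff_ch C 0 - e \<le> 1 - (\<integral>y. \<phi> y \<partial>snd C) + s * (\<integral>y. \<phi> y \<partial>fst C)"
    if t: "is_test (fst C) \<phi>" for \<phi>
  proof -
    have i1: "(\<integral>y. \<phi> y \<partial>fst C) = (\<integral>x. f x * \<phi> x \<partial>\<mu>)" "integrable \<mu> (\<lambda>x. f x * \<phi> x)"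
      using dens_test[OF fm f fnn pp(1) t sm[symmetric]] p by simp_all
    have i2: "(\<integral>y. \<phi> y \<partial>snd C) = (\<integral>x. g x * \<phi> x \<partial>\<mu>)" "integrable \<mu> (\<lambda>x. g x * \<phi> x)"
      using dens_test[OF fm g gnn pp(2) t sm[symmetric]] q by simp_all
    have pm: "\<phi> \<in> borel_measurable \<mu>" using test_meas[OF t sm] .
    have pb: "\<And>x. x \<in> space \<mu> \<Longrightarrow> 0 \<le> \<phi> x \<and> \<phi> x \<le> 1" using test_bnd[OF t sm] .
    have "1 - (\<integral>y. \<phi> y \<partial>snd C) + s * (\<integral>y. \<phi> y \<partial>fst C)
        = (\<integral>x. g x - g x * \<phi> x + s * (f x * \<phi> x) \<partial>\<mu>)"
      using i1 i2 gi by simp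
    also have "\<dots> \<ge> (\<integral>x. min (g x) (s * f x) \<partial>\<mu>)"
    proof (rule integral_mono)
      show "integrable \<mu> (\<lambda>x. min (g x) (s * f x))"
        by (rule Bochner_Integration.integrable_bound[OF gi(1)]) (use f g fnn gnn \<open>0 < s\<close> in auto)
      show "integrable \<mu> (\<lambda>x. g x - g x * \<phi> x + s * (f x * \<phi> x))" using i1 i2 gi by simp
      fix x assume x: "x \<in> space \<mu>"
      have a: "0 \<le> \<phi> x" "\<phi> x \<le> 1" using pb[OF x] by auto
      have "min (g x) (s * f x) = (1 - \<phi> x) * min (g x) (s * f x) + \<phi> x * min (g x) (s * f x)"
        by (simp add: algebra_simps)
      also have "\<dots> \<le> (1 - \<phi> x) * g x + \<phi> x * (s * f x)"
        using a by (intro add_mono mult_left_mono) auto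
      finally show "min (g x) (s * f x) \<le> g x - g x * \<phi> x + s * (f x * \<phi> x)" by (simp add: algebra_simps)
    qed
    finally show ?thesis using sN TL by linarith
  qed
  ultimately show ?thesis by blast
qed



lemma bind_bern:
  assumes r: "0 \<le> r" "r \<le> 1" and W: "\<And>x. W x \<in> space (subprob_algebra N)"
  shows "sets (measure_pmf (map_pmf h (bernoulli_pmf r)) \<bind> W) = sets N"
    "A \<in> sets N \<Longrightarrow> emeasure (measure_pmf (map_pmf h (bernoulli_pmf r)) \<bind> W) A
       = emeasure (W (h True)) A * ennreal r + emeasure (W (h False)) A * ennreal (1 - r)"
proof -
  have Wm: "W \<in> measurable (measure_pmf (map_pmf h (bernoulli_pmf r))) (subprob_algebra N)"
    using W by simp
  show "sets (measure_pmf (map_pmf h (bernoulli_pmf r)) \<bind> W) = sets N"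
    by (rule sets_bind) (use W in \<open>auto simp: space_subprob_algebra\<close>)
  assume A: "A \<in> sets N"
  have "emeasure (measure_pmf (map_pmf h (bernoulli_pmf r)) \<bind> W) A
     = (\<integral>\<^sup>+x. emeasure (W x) A \<partial>measure_pmf (map_pmf h (bernoulli_pmf r)))"
    by (rule emeasure_bind[OF _ Wm A]) simp
  also have "\<dots> = emeasure (W (h True)) A * ennreal r + emeasure (W (h False)) A * ennreal (1 - r)"
    using r by simp
  finally show "emeasure (measure_pmf (map_pmf h (bernoulli_pmf r)) \<bind> W) A
       = emeasure (W (h True)) A * ennreal r + emeasure (W (h False)) A * ennreal (1 - r)" .
qed

lemma mix2:
  assumes w1: "w1 \<in> borel_measurable \<mu>" "\<And>x. 0 \<le> w1 x" and w2: "w2 \<in> borel_measurable \<mu>" "\<And>x. 0 \<le> w2 x"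
    and F: "F \<in> borel_measurable \<mu>" and ab: "0 \<le> a" "0 \<le> b"
    and eq: "\<And>x. a * w1 x + b * w2 x = F x" and A: "A \<in> sets \<mu>"
  shows "emeasure (density \<mu> (\<lambda>x. ennreal (w1 x))) A * ennreal a + emeasure (density \<mu> (\<lambda>x. ennreal (w2 x))) A * ennreal b
       = emeasure (density \<mu> (\<lambda>x. ennreal (F x))) A"
proof -
  have "emeasure (density \<mu> (\<lambda>x. ennreal (w1 x))) A * ennreal a + emeasure (density \<mu> (\<lambda>x. ennreal (w2 x))) A * ennreal b
      = (\<integral>\<^sup>+x. ennreal (w1 x) * indicator A x \<partial>\<mu>) * ennreal a + (\<integral>\<^sup>+x. ennreal (w2 x) * indicator A x \<partial>\<mu>) * ennreal b"
    using w1 w2 A by (simp add: emeasure_density)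
  also have "\<dots> = (\<integral>\<^sup>+x. ennreal (w1 x) * indicator A x * ennreal a \<partial>\<mu>) + (\<integral>\<^sup>+x. ennreal (w2 x) * indicator A x * ennreal b \<partial>\<mu>)"
    using w1 w2 A by (simp add: nn_integral_multc)
  also have "\<dots> = (\<integral>\<^sup>+x. ennreal (w1 x) * indicator A x * ennreal a + ennreal (w2 x) * indicator A x * ennreal b \<partial>\<mu>)"
    by (rule nn_integral_add[symmetric]) (use w1 w2 A in auto)
  also have "\<dots> = (\<integral>\<^sup>+x. ennreal (F x) * indicator A x \<partial>\<mu>)"
  proof (rule nn_integral_cong)
    fix x
    have "ennreal (w1 x) * ennreal a + ennreal (w2 x) * ennreal b = ennreal (F x)"
      using w1(2)[of x] w2(2)[of x] ab eq[of x]
      by (simp add: ennreal_mult[symmetric] ennreal_plus[symmetric] mult.commute del: ennreal_plus)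
    then show "ennreal (w1 x) * indicator A x * ennreal a + ennreal (w2 x) * indicator A x * ennreal b = ennreal (F x) * indicator A x"
      by (cases "x \<in> A") simp_all
  qed
  also have "\<dots> = emeasure (density \<mu> (\<lambda>x. ennreal (F x))) A"
    using F A by (simp add: emeasure_density)
  finally show ?thesis .
qed

lemma dens_prob:
  assumes fm: "finite_measure \<mu>" and w: "w \<in> borel_measurable \<mu>" "\<And>x. 0 \<le> w x" "integrable \<mu> w" "(\<integral>x. w x \<partial>\<mu>) = 1"
  shows "prob_space (density \<mu> (\<lambda>x. ennreal (w x)))"
proof (rule prob_spaceI)
  have "emeasure (density \<mu> (\<lambda>x. ennreal (w x))) (space \<mu>) = (\<integral>\<^sup>+x. ennreal (w x) * indicator (space \<mu>) x \<partial>\<mu>)"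
    using w by (simp add: emeasure_density)
  also have "\<dots> = (\<integral>\<^sup>+x. ennreal (w x) \<partial>\<mu>)" by (intro nn_integral_cong) simp
  also have "\<dots> = ennreal (\<integral>x. w x \<partial>\<mu>)" by (rule nn_integral_eq_integral) (use w in auto)
  finally show "emeasure (density \<mu> (\<lambda>x. ennreal (w x))) (space (density \<mu> (\<lambda>x. ennreal (w x)))) = 1"
    using w(4) by simp
qed



lemma garble:
  assumes C: "is_channel C" and c: "0 < c" "c < 1" "c < s"
    and H: "\<And>\<phi>. is_test (fst C) \<phi> \<Longrightarrow> c \<le> 1 - (\<integral>y. \<phi> y \<partial>snd C) + s * (\<integral>y. \<phi> y \<partial>fst C)"
  shows "refines (Ech c s) C"
proof -
  obtain \<mu> f g where fm: "finite_measure \<mu>" and sm: "sets \<mu> = sets (fst C)"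
    and f: "f \<in> borel_measurable \<mu>" and g: "g \<in> borel_measurable \<mu>"
    and fnn: "\<And>x. 0 \<le> f x" and gnn: "\<And>x. 0 \<le> g x"
    and p: "fst C = density \<mu> (\<lambda>x. ennreal (f x))" and q: "snd C = density \<mu> (\<lambda>x. ennreal (g x))"
    using channel_densities[OF C] by blast
  have pp: "prob_space (density \<mu> (\<lambda>x. ennreal (f x)))" "prob_space (density \<mu> (\<lambda>x. ennreal (g x)))"
    using C p q unfolding is_channel_def by auto
  have fi: "integrable \<mu> f" "(\<integral>x. f x \<partial>\<mu>) = 1" using dens_int[OF fm f fnn pp(1)] by auto
  have gi: "integrable \<mu> g" "(\<integral>x. g x \<partial>\<mu>) = 1" using dens_int[OF fm g gnn pp(2)] by auto
  have s: "0 < s" using c by simp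
  define m where "m x = min (g x) (s * f x)" for x
  have mm: "m \<in> borel_measurable \<mu>" unfolding m_def using f g by measurable
  have mnn: "0 \<le> m x" "m x \<le> g x" "m x \<le> s * f x" for x using fnn[of x] gnn[of x] s by (auto simp: m_def)
  have mi: "integrable \<mu> m"
  proof (rule Bochner_Integration.integrable_bound[OF gi(1) mm], rule AE_I2)
    fix x show "norm (m x) \<le> norm (g x)" using mnn[of x] gnn[of x] by simp
  qed
  define c0 where "c0 = (\<integral>x. m x \<partial>\<mu>)"
  define G where "G = {x\<in>space \<mu>. s * f x < g x}"
  have Gm: "G \<in> sets \<mu>" unfolding G_def using f g by measurable
  have tG: "is_test (fst C) (indicator G)"
    unfolding is_test_def using Gm sm by (auto simp: indicator_def measurable_cong_sets[OF sm[symmetric] refl])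
  have "c \<le> 1 - (\<integral>y. indicator G y \<partial>snd C) + s * (\<integral>y. indicator G y \<partial>fst C)" by (rule H[OF tG])
  also have "(\<integral>y. indicator G y \<partial>snd C) = (\<integral>x. g x * indicator G x \<partial>\<mu>)"
    using dens_test(2)[OF fm g gnn pp(2) tG sm[symmetric]] q by simp
  also have "(\<integral>y. indicator G y \<partial>fst C) = (\<integral>x. f x * indicator G x \<partial>\<mu>)"
    using dens_test(2)[OF fm f fnn pp(1) tG sm[symmetric]] p by simp
  also have "1 - (\<integral>x. g x * indicator G x \<partial>\<mu>) + s * (\<integral>x. f x * indicator G x \<partial>\<mu>)
      = (\<integral>x. g x - g x * indicator G x + s * (f x * indicator G x) \<partial>\<mu>)"
    using gi dens_test(1)[OF fm g gnn pp(2) tG sm[symmetric]] dens_test(1)[OF fm f fnn pp(1) tG sm[symmetric]] by simp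
  also have "\<dots> = c0" unfolding c0_def
    by (intro Bochner_Integration.integral_cong) (auto simp: m_def G_def indicator_def)
  finally have cc0: "c \<le> c0" .
  have c0p: "0 < c0" using cc0 c by simp
  define t where "t = c / c0"
  have t: "0 < t" "t \<le> 1" using c c0p cc0 by (auto simp: t_def)
  define wv where "wv x = m x / c0" for x
  define wu where "wu x = (g x - t * m x) / (1 - c)" for x
  define ww where "ww x = (f x - t * m x / s) / (1 - c / s)" for x
  have cs: "c / s < 1" using c s by simp
  have wvnn: "0 \<le> wv x" for x using mnn c0p by (simp add: wv_def)
  have wunn: "0 \<le> wu x" for x
  proof -
    have "t * m x \<le> 1 * g x" using mnn[of x] t by (intro mult_mono) auto
    then show ?thesis using c by (simp add: wu_def)
  qed
  have wwnn: "0 \<le> ww x" for x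
  proof -
    have "t * m x \<le> 1 * (s * f x)" using mnn[of x] t by (intro mult_mono) auto
    then have "t * m x / s \<le> f x" using s by (simp add: divide_le_eq mult.commute)
    then show ?thesis using cs by (simp add: ww_def)
  qed
  have wvm: "wv \<in> borel_measurable \<mu>" unfolding wv_def using mm by measurable
  have wum: "wu \<in> borel_measurable \<mu>" unfolding wu_def using mm g by measurable
  have wwm: "ww \<in> borel_measurable \<mu>" unfolding ww_def using mm f by measurable
  have wvi: "integrable \<mu> wv" "(\<integral>x. wv x \<partial>\<mu>) = 1"
    unfolding wv_def using mi c0p by (simp_all add: c0_def)
  have wui: "integrable \<mu> wu" "(\<integral>x. wu x \<partial>\<mu>) = 1"
  proof -
    show "integrable \<mu> wu" unfolding wu_def using mi gi by simp
    have "(\<integral>x. wu x \<partial>\<mu>) = ((\<integral>x. g x \<partial>\<mu>) - t * c0) / (1 - c)"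
      unfolding wu_def c0_def using mi gi by simp
    also have "\<dots> = 1" using gi c c0p by (simp add: t_def)
    finally show "(\<integral>x. wu x \<partial>\<mu>) = 1" .
  qed
  have wwi: "integrable \<mu> ww" "(\<integral>x. ww x \<partial>\<mu>) = 1"
  proof -
    show "integrable \<mu> ww" unfolding ww_def using mi fi by simp
    have "(\<integral>x. ww x \<partial>\<mu>) = ((\<integral>x. f x \<partial>\<mu>) - t * c0 / s) / (1 - c / s)"
      unfolding ww_def c0_def using mi fi by simp
    also have "\<dots> = 1" using fi c c0p s cs by (simp add: t_def)
    finally show "(\<integral>x. ww x \<partial>\<mu>) = 1" .
  qed
  define Wu where "Wu = density \<mu> (\<lambda>x. ennreal (wu x))"
  define Wv where "Wv = density \<mu> (\<lambda>x. ennreal (wv x))"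
  define Ww where "Ww = density \<mu> (\<lambda>x. ennreal (ww x))"
  define W where "W y = (if y = (0::real) then Wu else if y = 1 then Wv else Ww)" for y
  have prW: "prob_space (W y)" for y
    unfolding W_def Wu_def Wv_def Ww_def
    using dens_prob[OF fm wum wunn wui] dens_prob[OF fm wvm wvnn wvi] dens_prob[OF fm wwm wwnn wwi] by simp
  have setsW: "sets (W y) = sets (fst C)" for y
    unfolding W_def Wu_def Wv_def Ww_def using sm by simp
  have Win: "W y \<in> space (subprob_algebra (fst C))" for y
    using prW setsW by (simp add: space_subprob_algebra prob_space_imp_subprob_space)
  have Wm: "W \<in> measurable (fst (Ech c s)) (subprob_algebra (fst C))"
    unfolding Ech_def using Win by simp
  have r1: "0 \<le> c / s" "c / s \<le> 1" using c s by auto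
  have r2: "0 \<le> 1 - c" "1 - c \<le> 1" using c by auto
  have sE1: "sets (fst (Ech c s) \<bind> W) = sets (fst C)"
    unfolding Ech_def fst_conv by (rule bind_bern(1)[where W=W and h="\<lambda>b. if b then 1 else 2", OF r1 Win])
  have sE2: "sets (snd (Ech c s) \<bind> W) = sets (fst C)"
    unfolding Ech_def snd_conv by (rule bind_bern(1)[where W=W and h="\<lambda>b. if b then 0 else 1", OF r2 Win])
  have e1: "fst (Ech c s) \<bind> W = fst C"
  proof (rule measure_eqI)
    show "sets (fst (Ech c s) \<bind> W) = sets (fst C)" by (rule sE1)
    fix A assume A: "A \<in> sets (fst (Ech c s) \<bind> W)"
    then have A': "A \<in> sets (fst C)" "A \<in> sets \<mu>"
      using sE1 sm by auto
    have "emeasure (fst (Ech c s) \<bind> W) A = emeasure Wv A * ennreal (c / s) + emeasure Ww A * ennreal (1 - c / s)"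
      unfolding Ech_def fst_conv using bind_bern(2)[where W=W and h="\<lambda>b. if b then 1 else 2", OF r1 Win A'(1)] by (simp add: W_def)
    also have "\<dots> = emeasure (density \<mu> (\<lambda>x. ennreal (f x))) A"
      unfolding Wv_def Ww_def
    proof (rule mix2[OF wvm wvnn wwm wwnn f _ _ _ A'(2)])
      show "0 \<le> c / s" "0 \<le> 1 - c / s" using r1 by auto
      fix x show "c / s * wv x + (1 - c / s) * ww x = f x"
        using c0p s cs by (simp add: wv_def ww_def t_def field_simps)
    qed
    finally show "emeasure (fst (Ech c s) \<bind> W) A = emeasure (fst C) A" using p by simp
  qed
  have e2: "snd (Ech c s) \<bind> W = snd C"
  proof (rule measure_eqI)
    show "sets (snd (Ech c s) \<bind> W) = sets (snd C)"
      using sE2 C unfolding is_channel_def by simp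
    fix A assume A: "A \<in> sets (snd (Ech c s) \<bind> W)"
    then have A': "A \<in> sets (fst C)" "A \<in> sets \<mu>"
      using sE2 sm by auto
    have "emeasure (snd (Ech c s) \<bind> W) A = emeasure Wu A * ennreal (1 - c) + emeasure Wv A * ennreal (1 - (1 - c))"
      unfolding Ech_def snd_conv using bind_bern(2)[where W=W and h="\<lambda>b. if b then 0 else 1", OF r2 Win A'(1)] by (simp add: W_def)
    also have "\<dots> = emeasure (density \<mu> (\<lambda>x. ennreal (g x))) A"
      unfolding Wu_def Wv_def
    proof (rule mix2[OF wum wunn wvm wvnn g _ _ _ A'(2)])
      show "0 \<le> 1 - c" "0 \<le> 1 - (1 - c)" using c by auto
      fix x show "(1 - c) * wu x + (1 - (1 - c)) * wv x = g x"
        using c0p c by (simp add: wu_def wv_def t_def field_simps)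
    qed
    finally show "emeasure (snd (Ech c s) \<bind> W) A = emeasure (snd C) A" using q by simp
  qed
  have sp: "space (fst (Ech c s)) = UNIV" unfolding Ech_def by simp
  show ?thesis unfolding refines_def using Wm prW e1 e2 by blast
qed



lemma lower_line:
  assumes D: "is_channel_glb D C C'" and C: "is_channel C" and C': "is_channel C'"
    and c: "0 < c" "c < 1" "c < s" and a: "0 \<le> \<alpha>"
    and H1: "\<And>\<phi>. is_test (fst C) \<phi> \<Longrightarrow> c \<le> 1 - (\<integral>y. \<phi> y \<partial>snd C) + s * (\<integral>y. \<phi> y \<partial>fst C)"
    and H2: "\<And>\<phi>. is_test (fst C') \<phi> \<Longrightarrow> c \<le> 1 - (\<integral>y. \<phi> y \<partial>snd C') + s * (\<integral>y. \<phi> y \<partial>fst C')"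
  shows "c - s * \<alpha> \<le> tradeoff_ch D \<alpha>"
proof -
  have r1: "refines (Ech c s) C" by (rule garble[OF C c H1])
  have r2: "refines (Ech c s) C'" by (rule garble[OF C' c H2])
  have Dc: "is_channel D" and rD: "refines (Ech c s) D"
    using D r1 r2 Ech_channel unfolding is_channel_glb_def by blast+
  have "c - s * \<alpha> \<le> tradeoff_ch (Ech c s) \<alpha>" by (rule Ech_tradeoff[OF c a])
  also have "\<dots> \<le> tradeoff_ch D \<alpha>" by (rule data_processing[OF Ech_channel Dc rD a])
  finally show ?thesis .
qed

lemma h_line:
  assumes C: "is_channel C" and h: "\<forall>x\<in>{0..1}. h x \<le> tradeoff_ch C x" and t: "is_test (fst C) \<phi>"
  shows "h (\<integral>y. \<phi> y \<partial>fst C) + s * (\<integral>y. \<phi> y \<partial>fst C) \<le> 1 - (\<integral>y. \<phi> y \<partial>snd C) + s * (\<integral>y. \<phi> y \<partial>fst C)"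
    "0 \<le> (\<integral>y. \<phi> y \<partial>fst C)" "(\<integral>y. \<phi> y \<partial>fst C) \<le> 1"
proof -
  have ps: "prob_space (fst C)" using C unfolding is_channel_def by auto
  show a0: "0 \<le> (\<integral>y. \<phi> y \<partial>fst C)" "(\<integral>y. \<phi> y \<partial>fst C) \<le> 1" using test_integrable(2,3)[OF ps t refl] by auto
  have "h (\<integral>y. \<phi> y \<partial>fst C) \<le> tradeoff_ch C (\<integral>y. \<phi> y \<partial>fst C)" using h a0 by simp
  also have "\<dots> \<le> 1 - (\<integral>y. \<phi> y \<partial>snd C)" by (rule tradeoff_le[OF C t order_refl])
  finally show "h (\<integral>y. \<phi> y \<partial>fst C) + s * (\<integral>y. \<phi> y \<partial>fst C) \<le> 1 - (\<integral>y. \<phi> y \<partial>snd C) + s * (\<integral>y. \<phi> y \<partial>fst C)" by simp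
qed

lemma lower:
  assumes D: "is_channel_glb D C C'" and C: "is_channel C" and C': "is_channel C'"
    and hF: "in_F h" and h1: "\<forall>x\<in>{0..1}. h x \<le> tradeoff_ch C x" and h2: "\<forall>x\<in>{0..1}. h x \<le> tradeoff_ch C' x"
    and a: "\<alpha> \<in> {0..1}"
  shows "h \<alpha> \<le> tradeoff_ch D \<alpha>"
proof -
  have Dc: "is_channel D" using D unfolding is_channel_glb_def by blast
  have hb: "\<And>x. x \<in> {0..1} \<Longrightarrow> 0 \<le> h x \<and> h x \<le> 1 \<and> h x \<le> 1 - x" using hF unfolding in_F_def by blast
  have hc: "convex_on {0..1} h" using hF unfolding in_F_def by blast
  have TD0: "0 \<le> tradeoff_ch D \<alpha>" using tradeoff_nonneg[OF Dc] a by simp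
  show ?thesis
  proof (cases "h \<alpha> \<le> 0")
    case True then show ?thesis using TD0 by linarith
  next
    case False
    then have hpos: "0 < h \<alpha>" by simp
    have "\<alpha> \<noteq> 1" using hb[of 1] hpos by auto
    then have a1: "\<alpha> < 1" using a by simp
    show ?thesis
    proof (cases "\<alpha> = 0")
      case True
      show ?thesis unfolding True
      proof (rule field_le_epsilon)
        fix e :: real assume e: "0 < e"
        show "h 0 \<le> tradeoff_ch D 0 + e"
        proof (cases "h 0 \<le> e")
          case True then show ?thesis using tradeoff_nonneg[OF Dc, of 0] by simp
        next
          case False
          obtain s1 where s1: "0 < s1" "\<And>\<phi>. is_test (fst C) \<phi> \<Longrightarrow>
              tradeoff_ch C 0 - e \<le> 1 - (\<integral>y. \<phi> y \<partial>snd C) + s1 * (\<integral>y. \<phi> y \<partial>fst C)"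
            using tradeoff0_approx[OF C e] by blast
          obtain s2 where s2: "0 < s2" "\<And>\<phi>. is_test (fst C') \<phi> \<Longrightarrow>
              tradeoff_ch C' 0 - e \<le> 1 - (\<integral>y. \<phi> y \<partial>snd C') + s2 * (\<integral>y. \<phi> y \<partial>fst C')"
            using tradeoff0_approx[OF C' e] by blast
          define s where "s = max 1 (max s1 s2)"
          have c: "0 < h 0 - e" "h 0 - e < 1" "h 0 - e < s"
            using False e hb[of 0] by (auto simp: s_def)
          have "h 0 - e - s * 0 \<le> tradeoff_ch D 0"
          proof (rule lower_line[OF D C C' c order_refl])
            fix \<phi> assume t: "is_test (fst C) \<phi>"
            have i: "0 \<le> (\<integral>y. \<phi> y \<partial>fst C)" using h_line(2)[OF C h1 t] .
            have "s1 * (\<integral>y. \<phi> y \<partial>fst C) \<le> s * (\<integral>y. \<phi> y \<partial>fst C)"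
              using i by (intro mult_right_mono) (auto simp: s_def)
            then show "h 0 - e \<le> 1 - (\<integral>y. \<phi> y \<partial>snd C) + s * (\<integral>y. \<phi> y \<partial>fst C)"
              using s1(2)[OF t] h1 by (smt (verit) atLeastAtMost_iff)
          next
            fix \<phi> assume t: "is_test (fst C') \<phi>"
            have i: "0 \<le> (\<integral>y. \<phi> y \<partial>fst C')" using h_line(2)[OF C' h2 t] .
            have "s2 * (\<integral>y. \<phi> y \<partial>fst C') \<le> s * (\<integral>y. \<phi> y \<partial>fst C')"
              using i by (intro mult_right_mono) (auto simp: s_def)
            then show "h 0 - e \<le> 1 - (\<integral>y. \<phi> y \<partial>snd C') + s * (\<integral>y. \<phi> y \<partial>fst C')"
              using s2(2)[OF t] h2 by (smt (verit) atLeastAtMost_iff)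
          qed
          then show ?thesis by simp
        qed
      qed
    next
      case False
      then have a0: "0 < \<alpha>" using a by simp
      obtain \<sigma> where sg: "\<And>x. x \<in> {0..1} \<Longrightarrow> h \<alpha> + \<sigma> * (x - \<alpha>) \<le> h x"
        using subgradient[OF hc a0 a1] by blast
      define s where "s = - \<sigma>"
      have sl: "h \<alpha> + s * \<alpha> \<le> h x + s * x" if "x \<in> {0..1}" for x
        using sg[OF that] by (simp add: s_def algebra_simps)
      have "h \<alpha> + s * \<alpha> \<le> h 1 + s * 1" using sl[of 1] by simp
      then have hs: "h \<alpha> + s * \<alpha> \<le> s" using hb[of 1] by simp
      then have spos: "0 < s" using hpos a1 a0
        by (smt (verit) mult_le_cancel_left1)
      have h0: "h \<alpha> + s * \<alpha> \<le> 1" using sl[of 0] hb[of 0] by simp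
      show ?thesis
      proof (rule field_le_epsilon)
        fix e :: real assume e: "0 < e"
        show "h \<alpha> \<le> tradeoff_ch D \<alpha> + e"
        proof (cases "h \<alpha> \<le> e")
          case True then show ?thesis using TD0 by simp
        next
          case False
          have sa: "0 < s * \<alpha>" using spos a0 by simp
          have c: "0 < h \<alpha> + s * \<alpha> - e" "h \<alpha> + s * \<alpha> - e < 1" "h \<alpha> + s * \<alpha> - e < s"
            using False e h0 hs sa by auto
          have "h \<alpha> + s * \<alpha> - e - s * \<alpha> \<le> tradeoff_ch D \<alpha>"
          proof (rule lower_line[OF D C C' c])
            show "0 \<le> \<alpha>" using a0 by simp
            fix \<phi> assume t: "is_test (fst C) \<phi>"
            have "h \<alpha> + s * \<alpha> \<le> h (\<integral>y. \<phi> y \<partial>fst C) + s * (\<integral>y. \<phi> y \<partial>fst C)"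
              using sl h_line(2,3)[OF C h1 t] by simp
            then show "h \<alpha> + s * \<alpha> - e \<le> 1 - (\<integral>y. \<phi> y \<partial>snd C) + s * (\<integral>y. \<phi> y \<partial>fst C)"
              using h_line(1)[OF C h1 t, of s] e by linarith
          next
            fix \<phi> assume t: "is_test (fst C') \<phi>"
            have "h \<alpha> + s * \<alpha> \<le> h (\<integral>y. \<phi> y \<partial>fst C') + s * (\<integral>y. \<phi> y \<partial>fst C')"
              using sl h_line(2,3)[OF C' h2 t] by simp
            then show "h \<alpha> + s * \<alpha> - e \<le> 1 - (\<integral>y. \<phi> y \<partial>snd C') + s * (\<integral>y. \<phi> y \<partial>fst C')"
              using h_line(1)[OF C' h2 t, of s] e by linarith
          qed
          then show ?thesis by simp
        qed
      qed
    qed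
  qed
qed

theorem mainTheorem5:
  fixes C :: "'a channel" and C' :: "'b channel" and D :: "'d channel"
  assumes "is_channel C" and "is_channel C'"
    and "is_channel_glb D C C'"
  shows "\<forall>\<alpha>\<in>{0..1}. tradeoff_ch D \<alpha> = F_meet (tradeoff_ch C) (tradeoff_ch C') \<alpha>"
proof
  fix \<alpha> :: real assume a: "\<alpha> \<in> {0..1}"
  have Dc: "is_channel D" and r1: "refines D C" and r2: "refines D C'"
    using assms(3) unfolding is_channel_glb_def by blast+
  let ?S = "{h \<alpha> | h. in_F h \<and> (\<forall>x\<in>{0..1}. h x \<le> tradeoff_ch C x \<and> h x \<le> tradeoff_ch C' x)}"
  have mem: "in_F (tradeoff_ch D) \<and> (\<forall>x\<in>{0..1}. tradeoff_ch D x \<le> tradeoff_ch C x \<and> tradeoff_ch D x \<le> tradeoff_ch C' x)"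
    using tradeoff_in_F[OF Dc] data_processing[OF Dc assms(1) r1] data_processing[OF Dc assms(2) r2] by auto
  then have inS: "tradeoff_ch D \<alpha> \<in> ?S" by blast
  have bdd: "bdd_above ?S"
  proof (rule bdd_aboveI[where M="tradeoff_ch C \<alpha>"])
    fix x assume "x \<in> ?S" then show "x \<le> tradeoff_ch C \<alpha>" using a by auto
  qed
  have "tradeoff_ch D \<alpha> \<le> Sup ?S" by (rule cSup_upper[OF inS bdd])
  moreover have "Sup ?S \<le> tradeoff_ch D \<alpha>"
  proof (rule cSup_least)
    show "?S \<noteq> {}" using inS by blast
    fix x assume "x \<in> ?S"
    then obtain h where h: "x = h \<alpha>" "in_F h" "\<forall>x\<in>{0..1}. h x \<le> tradeoff_ch C x \<and> h x \<le> tradeoff_ch C' x" by blast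
    show "x \<le> tradeoff_ch D \<alpha>" unfolding h(1)
      by (rule lower[OF assms(3,1,2) h(2) _ _ a]) (use h(3) in auto)
  qed
  ultimately show "tradeoff_ch D \<alpha> = F_meet (tradeoff_ch C) (tradeoff_ch C') \<alpha>"
    unfolding F_meet_def by simp
qed


end
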